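(* Let $G$ be a finite group and $\mathcal{A}$ a finite subgroup of $\mathbb{C}^\times$. Let $M$ be a square matrix with entries in $\mathcal{A}$ whose rows and columns are labelled by the elements of $G$ in a fixed ordering. Then $M$ is cocyclic over $G$ if and only if there exist a normalised 2-cocycle $\psi\colon G\times G\to\mathcal{A}$ and a matrix $\mathcal{A}$-equivalent to $M$ lying in the centraliser algebra $\mathrm{C}(R)=\{X : XR(\gamma)=R(\gamma)X\ \forall\gamma\in\Gamma\}$, where $\Gamma=(G,\mathcal{A},\psi)$ and $R$ is the monomial representation $R(a,g)=a\left[\psi(x,g)\delta^{xg}_{y}\right]_{x,y\in G}$ of $\Gamma$.
   Context: A normalised 2-cocycle is a function $\psi\colon G\times G\to\mathcal{A}$ with $\psi(g,1)=\psi(1,g)=1$ and $\psi(g,h)\psi(gh,k)=\psi(g,hk)\psi(h,k)$ for all $g,h,k$. The extension $\Gamma=(G,\mathcal{A},\psi)$ is the group on $\mathcal{A}\times G$ with multiplication $(a,g)(b,h)=(ab\,\psi(g,h),gh)$. A matrix is strictly cocyclic over $G$ if it equals $[\psi(x,y)\phi(xy)]_{x,y\in G}$ for some normalised 2-cocycle $\psi\colon G\times G\to\mathcal{A}$ and some map $\phi\colon G\to\mathcal{A}$. Two matrices $M,M'$ are $\mathcal{A}$-equivalent if $M'=PMQ^\ast$ for monomial matrices $P,Q$ with nonzero entries in $\mathcal{A}$. $M$ is cocyclic over $G$ if it is $\mathcal{A}$-equivalent to a strictly cocyclic matrix. $\delta^a_b$ is the Kronecker delta. *)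

theory Defs
  imports Complex_Main "HOL-Algebra.Group"
begin

text \<open>Square matrices with rows and columns labelled by the elements of a finite group G
  are represented as functions 'g => 'g => complex; only their values on
  carrier G x carrier G are meaningful.\<close>

type_synonym 'g gmat = "'g \<Rightarrow> 'g \<Rightarrow> complex"

definition finite_unit_subgroup :: "complex set \<Rightarrow> bool" where
  "finite_unit_subgroup A \<longleftrightarrow> finite A \<and> 1 \<in> A \<and> 0 \<notin> A \<and>
     (\<forall>a\<in>A. \<forall>b\<in>A. a * b \<in> A) \<and> (\<forall>a\<in>A. inverse a \<in> A)"

definition gmat_mult :: "('g, 'b) monoid_scheme \<Rightarrow> 'g gmat \<Rightarrow> 'g gmat \<Rightarrow> 'g gmat" where
  "gmat_mult G X Y = (\<lambda>x y. \<Sum>z\<in>carrier G. X x z * Y z y)"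

definition gmat_eq :: "('g, 'b) monoid_scheme \<Rightarrow> 'g gmat \<Rightarrow> 'g gmat \<Rightarrow> bool" where
  "gmat_eq G X Y \<longleftrightarrow> (\<forall>x\<in>carrier G. \<forall>y\<in>carrier G. X x y = Y x y)"

definition gmat_adj :: "'g gmat \<Rightarrow> 'g gmat" where
  "gmat_adj Q = (\<lambda>x y. cnj (Q y x))"

definition monomial_over :: "('g, 'b) monoid_scheme \<Rightarrow> complex set \<Rightarrow> 'g gmat \<Rightarrow> bool" where
  "monomial_over G A P \<longleftrightarrow>
     (\<forall>x\<in>carrier G. \<exists>!y. y \<in> carrier G \<and> P x y \<noteq> 0) \<and>
     (\<forall>y\<in>carrier G. \<exists>!x. x \<in> carrier G \<and> P x y \<noteq> 0) \<and>
     (\<forall>x\<in>carrier G. \<forall>y\<in>carrier G. P x y \<noteq> 0 \<longrightarrow> P x y \<in> A)"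

definition A_equiv :: "('g, 'b) monoid_scheme \<Rightarrow> complex set \<Rightarrow> 'g gmat \<Rightarrow> 'g gmat \<Rightarrow> bool" where
  "A_equiv G A M M' \<longleftrightarrow> (\<exists>P Q. monomial_over G A P \<and> monomial_over G A Q \<and>
       gmat_eq G M' (gmat_mult G (gmat_mult G P M) (gmat_adj Q)))"

definition normalised_cocycle ::
  "('g, 'b) monoid_scheme \<Rightarrow> complex set \<Rightarrow> ('g \<Rightarrow> 'g \<Rightarrow> complex) \<Rightarrow> bool" where
  "normalised_cocycle G A \<psi> \<longleftrightarrow>
     (\<forall>g\<in>carrier G. \<forall>h\<in>carrier G. \<psi> g h \<in> A) \<and>
     (\<forall>g\<in>carrier G. \<psi> g \<one>\<^bsub>G\<^esub> = 1 \<and> \<psi> \<one>\<^bsub>G\<^esub> g = 1) \<and>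
     (\<forall>g\<in>carrier G. \<forall>h\<in>carrier G. \<forall>k\<in>carrier G.
        \<psi> g h * \<psi> (g \<otimes>\<^bsub>G\<^esub> h) k = \<psi> g (h \<otimes>\<^bsub>G\<^esub> k) * \<psi> h k)"

definition strictly_cocyclic :: "('g, 'b) monoid_scheme \<Rightarrow> complex set \<Rightarrow> 'g gmat \<Rightarrow> bool" where
  "strictly_cocyclic G A M \<longleftrightarrow>
     (\<exists>\<psi> \<phi>. normalised_cocycle G A \<psi> \<and> (\<forall>g\<in>carrier G. \<phi> g \<in> A) \<and>
        gmat_eq G M (\<lambda>x y. \<psi> x y * \<phi> (x \<otimes>\<^bsub>G\<^esub> y)))"

definition cocyclic :: "('g, 'b) monoid_scheme \<Rightarrow> complex set \<Rightarrow> 'g gmat \<Rightarrow> bool" where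
  "cocyclic G A M \<longleftrightarrow> (\<exists>S. strictly_cocyclic G A S \<and> A_equiv G A M S)"

definition ext_carrier :: "('g, 'b) monoid_scheme \<Rightarrow> complex set \<Rightarrow> (complex \<times> 'g) set" where
  "ext_carrier G A = A \<times> carrier G"

definition mono_rep ::
  "('g, 'b) monoid_scheme \<Rightarrow> ('g \<Rightarrow> 'g \<Rightarrow> complex) \<Rightarrow> complex \<times> 'g \<Rightarrow> 'g gmat" where
  "mono_rep G \<psi> \<gamma> = (\<lambda>x y. fst \<gamma> * \<psi> x (snd \<gamma>) * (if x \<otimes>\<^bsub>G\<^esub> snd \<gamma> = y then 1 else 0))"

definition centraliser ::
  "('g, 'b) monoid_scheme \<Rightarrow> complex set \<Rightarrow> ('g \<Rightarrow> 'g \<Rightarrow> complex) \<Rightarrow> 'g gmat set" where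
  "centraliser G A \<psi> = {X. \<forall>\<gamma>\<in>ext_carrier G A.
      gmat_eq G (gmat_mult G X (mono_rep G \<psi> \<gamma>)) (gmat_mult G (mono_rep G \<psi> \<gamma>) X)}"

end

theory Submission
  imports Defs
begin

lemma unit_cnj:
  assumes "finite_unit_subgroup A" "a \<in> A"
  shows "cnj a = inverse a"
proof -
  have fin: "finite A" and nz: "0 \<notin> A" and one: "1 \<in> A" and mul: "\<forall>a\<in>A. \<forall>b\<in>A. a * b \<in> A"
    using assms(1) unfolding finite_unit_subgroup_def by auto
  have pw: "a ^ n \<in> A" for n
    by (induction n) (use one mul assms(2) in auto)
  have "\<not> inj (\<lambda>n::nat. a ^ n)"
  proof
    assume "inj (\<lambda>n::nat. a ^ n)"
    moreover have "range (\<lambda>n::nat. a ^ n) \<subseteq> A" using pw by auto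
    ultimately have "finite (UNIV :: nat set)"
      using fin finite_imageD finite_subset by blast
    then show False by simp
  qed
  then obtain i j :: nat where ij: "i \<noteq> j" "a ^ i = a ^ j" unfolding inj_def by blast
  have a0: "a \<noteq> 0" using nz assms(2) by auto
  have "\<exists>k>0. a ^ k = 1"
  proof (cases "i < j")
    case True
    have "a ^ j = a ^ i * a ^ (j - i)" using True by (simp add: power_add[symmetric])
    then have "a ^ (j - i) = 1" using ij a0 by simp
    then show ?thesis using True by (intro exI[of _ "j - i"]) auto
  next
    case False
    then have "j < i" using ij by simp
    have "a ^ i = a ^ j * a ^ (i - j)" using \<open>j < i\<close> by (simp add: power_add[symmetric])
    then have "a ^ (i - j) = 1" using ij a0 by simp
    then show ?thesis using \<open>j < i\<close> by (intro exI[of _ "i - j"]) auto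
  qed
  then obtain k where k: "k > 0" "a ^ k = 1" by blast
  have "norm a ^ k = 1 ^ k" using k by (metis norm_one norm_power power_one)
  then have "norm a = 1" using k(1) power_eq_iff_eq_base by (metis norm_ge_zero zero_le_one)
  then have "a * cnj a = 1" using complex_norm_square[of a] by simp
  then show ?thesis using a0 by (simp add: field_simps)
qed

lemma unit_cnj_in:
  assumes "finite_unit_subgroup A" "a \<in> A"
  shows "cnj a \<in> A"
  using unit_cnj[OF assms] assms unfolding finite_unit_subgroup_def by auto

lemma sum_single:
  assumes "finite C" "t0 \<in> C" "\<forall>t\<in>C. t \<noteq> t0 \<longrightarrow> f t = 0"
  shows "(\<Sum>t\<in>C. f t) = f t0"
proof -
  have "(\<Sum>t\<in>C. f t) = (\<Sum>t\<in>C. if t = t0 then f t else 0)"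
    using assms(3) by (intro sum.cong) auto
  also have "\<dots> = f t0" using assms(1,2) by (simp add: sum.delta')
  finally show ?thesis .
qed

lemma A_equiv_col:
  fixes G :: "('g, 'b) monoid_scheme" (structure)
  assumes G: "group G" and fin: "finite (carrier G)" and A: "finite_unit_subgroup A"
    and eq: "A_equiv G A M X"
    and c: "\<forall>u\<in>carrier G. c u \<in> A"
    and Y: "\<forall>x\<in>carrier G. \<forall>u\<in>carrier G. Y x u = c u * X x (inv\<^bsub>G\<^esub> u)"
  shows "A_equiv G A M Y"
proof -
  interpret group G by (rule G)
  obtain P Q where P: "monomial_over G A P" and Q: "monomial_over G A Q"
    and X: "gmat_eq G X (gmat_mult G (gmat_mult G P M) (gmat_adj Q))"
    using eq unfolding A_equiv_def by blast
  define Q' where "Q' = (\<lambda>u z. Q (inv u) z * cnj (c u))"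
  have cnz: "c u \<noteq> 0" if "u \<in> carrier G" for u
    using c that A unfolding finite_unit_subgroup_def by auto
  have Q': "monomial_over G A Q'"
    unfolding monomial_over_def
  proof (intro conjI ballI impI)
    fix x assume x: "x \<in> carrier G"
    have "inv x \<in> carrier G" using x by simp
    then have "\<exists>!y. y \<in> carrier G \<and> Q (inv x) y \<noteq> 0" using Q unfolding monomial_over_def by blast
    then show "\<exists>!y. y \<in> carrier G \<and> Q' x y \<noteq> 0" using cnz[OF x] unfolding Q'_def by simp
  next
    fix y assume y: "y \<in> carrier G"
    then obtain x0 where x0: "x0 \<in> carrier G" "Q x0 y \<noteq> 0"
      and un: "\<forall>x. x \<in> carrier G \<and> Q x y \<noteq> 0 \<longrightarrow> x = x0"
      using Q unfolding monomial_over_def by metis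
    show "\<exists>!x. x \<in> carrier G \<and> Q' x y \<noteq> 0"
    proof (intro ex1I[of _ "inv x0"])
      show "inv x0 \<in> carrier G \<and> Q' (inv x0) y \<noteq> 0" using x0 cnz[of "inv x0"] by (simp add: Q'_def)
    next
      fix x assume "x \<in> carrier G \<and> Q' x y \<noteq> 0"
      then have "x \<in> carrier G" "Q (inv x) y \<noteq> 0" by (auto simp: Q'_def)
      then have "inv x = x0" using un by simp
      then show "x = inv x0" using \<open>x \<in> carrier G\<close> by (metis inv_inv)
    qed
  next
    fix x y assume x: "x \<in> carrier G" and y: "y \<in> carrier G" and nz: "Q' x y \<noteq> 0"
    then have "Q (inv x) y \<noteq> 0" by (simp add: Q'_def)
    then have "Q (inv x) y \<in> A" using Q x y unfolding monomial_over_def by simp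
    moreover have "cnj (c x) \<in> A" using unit_cnj_in[OF A] c x by simp
    ultimately show "Q' x y \<in> A" using A unfolding Q'_def finite_unit_subgroup_def by simp
  qed
  have "gmat_eq G Y (gmat_mult G (gmat_mult G P M) (gmat_adj Q'))"
    unfolding gmat_eq_def
  proof (intro ballI)
    fix x u assume x: "x \<in> carrier G" and u: "u \<in> carrier G"
    have "gmat_mult G (gmat_mult G P M) (gmat_adj Q') x u
        = c u * gmat_mult G (gmat_mult G P M) (gmat_adj Q) x (inv u)"
      unfolding gmat_mult_def gmat_adj_def Q'_def
      by (simp add: sum_distrib_left mult_ac)
    also have "\<dots> = c u * X x (inv u)" using X x u unfolding gmat_eq_def by simp
    finally show "Y x u = gmat_mult G (gmat_mult G P M) (gmat_adj Q') x u" using Y x u by simp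
  qed
  then show ?thesis unfolding A_equiv_def using P Q' by blast
qed

lemma mult_rep_right:
  fixes G :: "('g, 'b) monoid_scheme" (structure)
  assumes G: "group G" and fin: "finite (carrier G)"
    and x: "x \<in> carrier G" and y: "y \<in> carrier G" and g: "g \<in> carrier G"
  shows "gmat_mult G X (mono_rep G \<psi> (a, g)) x y = X x (y \<otimes> inv g) * (a * \<psi> (y \<otimes> inv g) g)"
proof -
  interpret group G by (rule G)
  have "gmat_mult G X (mono_rep G \<psi> (a, g)) x y
      = (\<Sum>z\<in>carrier G. if z = y \<otimes> inv g then X x z * (a * \<psi> z g) else 0)"
    unfolding gmat_mult_def mono_rep_def
  proof (intro sum.cong refl)
    fix z assume z: "z \<in> carrier G"
    have e: "(z \<otimes> g = y) = (z = y \<otimes> inv g)" using inv_solve_right[OF z y g] by auto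
    show "X x z * (fst (a, g) * \<psi> z (snd (a, g)) * (if z \<otimes> snd (a, g) = y then 1 else 0))
        = (if z = y \<otimes> inv g then X x z * (a * \<psi> z g) else 0)"
      by (simp only: e fst_conv snd_conv) simp
  qed
  also have "\<dots> = X x (y \<otimes> inv g) * (a * \<psi> (y \<otimes> inv g) g)"
    using fin y g by (simp add: sum.delta')
  finally show ?thesis .
qed

lemma mult_rep_left:
  fixes G :: "('g, 'b) monoid_scheme" (structure)
  assumes G: "group G" and fin: "finite (carrier G)"
    and x: "x \<in> carrier G" and y: "y \<in> carrier G" and g: "g \<in> carrier G"
  shows "gmat_mult G (mono_rep G \<psi> (a, g)) X x y = a * \<psi> x g * X (x \<otimes> g) y"
proof -
  interpret group G by (rule G)
  have "gmat_mult G (mono_rep G \<psi> (a, g)) X x y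
      = (\<Sum>z\<in>carrier G. if z = x \<otimes> g then a * \<psi> x g * X z y else 0)"
    unfolding gmat_mult_def mono_rep_def
  proof (intro sum.cong refl)
    fix z assume z: "z \<in> carrier G"
    have e: "(x \<otimes> g = z) = (z = x \<otimes> g)" by auto
    show "fst (a, g) * \<psi> x (snd (a, g)) * (if x \<otimes> snd (a, g) = z then 1 else 0) * X z y
        = (if z = x \<otimes> g then a * \<psi> x g * X z y else 0)"
      by (simp only: e fst_conv snd_conv) simp
  qed
  also have "\<dots> = a * \<psi> x g * X (x \<otimes> g) y"
    using fin x g by (simp add: sum.delta')
  finally show ?thesis .
qed

lemma X_entries:
  fixes G :: "('g, 'b) monoid_scheme" (structure)
  assumes G: "group G" and fin: "finite (carrier G)" and A: "finite_unit_subgroup A"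
    and eq: "A_equiv G A M X"
    and MA: "\<forall>x\<in>carrier G. \<forall>y\<in>carrier G. M x y \<in> A"
    and x: "x \<in> carrier G" and y: "y \<in> carrier G"
  shows "X x y \<in> A"
proof -
  obtain P Q where P: "monomial_over G A P" and Q: "monomial_over G A Q"
    and X: "gmat_eq G X (gmat_mult G (gmat_mult G P M) (gmat_adj Q))"
    using eq unfolding A_equiv_def by blast
  have mulA: "a * b \<in> A" if "a \<in> A" "b \<in> A" for a b
    using A that unfolding finite_unit_subgroup_def by auto
  obtain t0 where t0: "t0 \<in> carrier G" "P x t0 \<noteq> 0"
    and ut: "\<And>t. t \<in> carrier G \<Longrightarrow> P x t \<noteq> 0 \<Longrightarrow> t = t0"
    using P x unfolding monomial_over_def by metis
  obtain z0 where z0: "z0 \<in> carrier G" "Q y z0 \<noteq> 0"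
    and uz: "\<And>z. z \<in> carrier G \<Longrightarrow> Q y z \<noteq> 0 \<Longrightarrow> z = z0"
    using Q y unfolding monomial_over_def by metis
  have PM: "gmat_mult G P M x z = P x t0 * M t0 z" for z
    unfolding gmat_mult_def
  proof (rule sum_single[OF fin t0(1)], intro ballI impI)
    fix t assume "t \<in> carrier G" "t \<noteq> t0"
    then have "P x t = 0" using ut by blast
    then show "P x t * M t z = 0" by simp
  qed
  have "X x y = gmat_mult G (gmat_mult G P M) (gmat_adj Q) x y"
    using X x y unfolding gmat_eq_def by blast
  also have "\<dots> = (\<Sum>z\<in>carrier G. P x t0 * M t0 z * cnj (Q y z))"
    unfolding gmat_mult_def[of G "gmat_mult G P M"] gmat_adj_def PM ..
  also have "\<dots> = P x t0 * M t0 z0 * cnj (Q y z0)"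
  proof (rule sum_single[OF fin z0(1)], intro ballI impI)
    fix t assume "t \<in> carrier G" "t \<noteq> z0"
    then have "Q y t = 0" using uz by blast
    then show "P x t0 * M t0 t * cnj (Q y t) = 0" by simp
  qed
  finally have "X x y = P x t0 * M t0 z0 * cnj (Q y z0)" .
  moreover have "P x t0 \<in> A" using P x t0 unfolding monomial_over_def by blast
  moreover have "Q y z0 \<in> A" using Q y z0 unfolding monomial_over_def by blast
  moreover have "M t0 z0 \<in> A" using MA t0 z0 by blast
  ultimately show ?thesis using mulA unit_cnj_in[OF A] by metis
qed

lemma alg1:
  fixes p1 p2 A1 B1 C D E Phi a :: complex
  assumes "p1 \<noteq> 0" "p2 \<noteq> 0" "A1 * B1 = C * D" "E * p2 = p1 * D"
  shows "inverse p1 * C * Phi * (a * E) = a * A1 * (inverse p2 * B1 * Phi)"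
proof -
  have "inverse p1 * C * Phi * (a * E) * p1 * p2 = C * Phi * a * (E * p2)"
    using assms(1) by (simp add: field_simps)
  also have "\<dots> = C * Phi * a * p1 * D" using assms(4) by simp
  also have "\<dots> = a * (A1 * B1) * Phi * p1" using assms(3) by (simp add: mult_ac)
  also have "\<dots> = a * A1 * (inverse p2 * B1 * Phi) * p1 * p2" using assms(2) by (simp add: field_simps)
  finally show ?thesis using assms(1,2) by simp
qed

theorem theorem4p4:
  fixes G :: "('g, 'b) monoid_scheme" and A :: "complex set" and M :: "'g gmat"
  assumes "group G" and "finite (carrier G)"
    and "finite_unit_subgroup A"
    and "\<forall>x\<in>carrier G. \<forall>y\<in>carrier G. M x y \<in> A"
  shows "cocyclic G A M \<longleftrightarrow>
    (\<exists>\<psi> X. normalised_cocycle G A \<psi> \<and> A_equiv G A M X \<and> X \<in> centraliser G A \<psi>)"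
proof -
  note G = assms(1) and fin = assms(2) and Au = assms(3) and MA = assms(4)
  interpret group G by (rule G)
  have mulA: "a * b \<in> A" if "a \<in> A" "b \<in> A" for a b
    using Au that unfolding finite_unit_subgroup_def by auto
  have invA: "inverse a \<in> A" if "a \<in> A" for a
    using Au that unfolding finite_unit_subgroup_def by auto
  have nzA: "a \<noteq> 0" if "a \<in> A" for a
    using Au that unfolding finite_unit_subgroup_def by auto
  show ?thesis
  proof
    assume "cocyclic G A M"
    then obtain S \<psi> \<phi> where MS: "A_equiv G A M S" and coc: "normalised_cocycle G A \<psi>"
      and phA: "\<forall>g\<in>carrier G. \<phi> g \<in> A"
      and Seq: "gmat_eq G S (\<lambda>x y. \<psi> x y * \<phi> (x \<otimes>\<^bsub>G\<^esub> y))"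
      unfolding cocyclic_def strictly_cocyclic_def by blast
    have psA: "\<psi> g h \<in> A" if "g \<in> carrier G" "h \<in> carrier G" for g h
      using coc that unfolding normalised_cocycle_def by blast
    have cocy: "\<psi> g h * \<psi> (g \<otimes>\<^bsub>G\<^esub> h) k = \<psi> g (h \<otimes>\<^bsub>G\<^esub> k) * \<psi> h k"
      if "g \<in> carrier G" "h \<in> carrier G" "k \<in> carrier G" for g h k
      using coc that unfolding normalised_cocycle_def by blast
    define X where "X = (\<lambda>x w. inverse (\<psi> w (inv\<^bsub>G\<^esub> w)) * S x (inv\<^bsub>G\<^esub> w))"
    have MX: "A_equiv G A M X"
      by (rule A_equiv_col[OF G fin Au MS, of "\<lambda>u. inverse (\<psi> u (inv\<^bsub>G\<^esub> u))"])
         (auto simp: X_def intro!: invA psA)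
    have "X \<in> centraliser G A \<psi>"
      unfolding centraliser_def ext_carrier_def gmat_eq_def
    proof (intro CollectI ballI)
      fix \<gamma> x y assume \<gamma>: "\<gamma> \<in> A \<times> carrier G" and x: "x \<in> carrier G" and y: "y \<in> carrier G"
      obtain a g where ag: "\<gamma> = (a, g)" "a \<in> A" "g \<in> carrier G" using \<gamma> by auto
      define v where "v = y \<otimes>\<^bsub>G\<^esub> inv\<^bsub>G\<^esub> g"
      have v: "v \<in> carrier G" using y ag by (simp add: v_def)
      have iv: "inv\<^bsub>G\<^esub> v = g \<otimes>\<^bsub>G\<^esub> inv\<^bsub>G\<^esub> y" using y ag by (simp add: v_def inv_mult_group)
      have vg: "v \<otimes>\<^bsub>G\<^esub> g = y" using y ag by (simp add: v_def m_assoc)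
      have xiv: "x \<otimes>\<^bsub>G\<^esub> inv\<^bsub>G\<^esub> v = x \<otimes>\<^bsub>G\<^esub> g \<otimes>\<^bsub>G\<^esub> inv\<^bsub>G\<^esub> y" using x y ag by (simp add: iv m_assoc)
      have L: "gmat_mult G X (mono_rep G \<psi> \<gamma>) x y = X x v * (a * \<psi> v g)"
        unfolding ag(1) v_def by (rule mult_rep_right[OF G fin x y ag(3)])
      have R: "gmat_mult G (mono_rep G \<psi> \<gamma>) X x y = a * \<psi> x g * X (x \<otimes>\<^bsub>G\<^esub> g) y"
        unfolding ag(1) by (rule mult_rep_left[OF G fin x y ag(3)])
      have X1: "X x v = inverse (\<psi> v (inv\<^bsub>G\<^esub> v)) * \<psi> x (g \<otimes>\<^bsub>G\<^esub> inv\<^bsub>G\<^esub> y) * \<phi> (x \<otimes>\<^bsub>G\<^esub> g \<otimes>\<^bsub>G\<^esub> inv\<^bsub>G\<^esub> y)"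
      proof -
        have "inv\<^bsub>G\<^esub> v \<in> carrier G" using v by simp
        then have "S x (inv\<^bsub>G\<^esub> v) = \<psi> x (inv\<^bsub>G\<^esub> v) * \<phi> (x \<otimes>\<^bsub>G\<^esub> inv\<^bsub>G\<^esub> v)"
          using Seq x unfolding gmat_eq_def by blast
        then show ?thesis unfolding X_def iv[symmetric] xiv[symmetric] by simp
      qed
      have X2: "X (x \<otimes>\<^bsub>G\<^esub> g) y = inverse (\<psi> y (inv\<^bsub>G\<^esub> y)) * \<psi> (x \<otimes>\<^bsub>G\<^esub> g) (inv\<^bsub>G\<^esub> y) * \<phi> (x \<otimes>\<^bsub>G\<^esub> g \<otimes>\<^bsub>G\<^esub> inv\<^bsub>G\<^esub> y)"
        using Seq x y ag unfolding X_def gmat_eq_def by simp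
      have c1: "\<psi> x g * \<psi> (x \<otimes>\<^bsub>G\<^esub> g) (inv\<^bsub>G\<^esub> y) = \<psi> x (g \<otimes>\<^bsub>G\<^esub> inv\<^bsub>G\<^esub> y) * \<psi> g (inv\<^bsub>G\<^esub> y)"
        using cocy x y ag by simp
      have c2: "\<psi> v g * \<psi> y (inv\<^bsub>G\<^esub> y) = \<psi> v (inv\<^bsub>G\<^esub> v) * \<psi> g (inv\<^bsub>G\<^esub> y)"
        using cocy[of v g "inv\<^bsub>G\<^esub> y"] v y ag by (simp add: vg iv)
      show "gmat_mult G X (mono_rep G \<psi> \<gamma>) x y = gmat_mult G (mono_rep G \<psi> \<gamma>) X x y"
        unfolding L R X1 X2
        by (rule alg1[OF nzA nzA c1 c2]) (use psA v y in auto)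
    qed
    then show "\<exists>\<psi> X. normalised_cocycle G A \<psi> \<and> A_equiv G A M X \<and> X \<in> centraliser G A \<psi>"
      using coc MX by blast
  next
    assume "\<exists>\<psi> X. normalised_cocycle G A \<psi> \<and> A_equiv G A M X \<and> X \<in> centraliser G A \<psi>"
    then obtain \<psi> X where coc: "normalised_cocycle G A \<psi>" and MX: "A_equiv G A M X"
      and XC: "X \<in> centraliser G A \<psi>" by blast
    have psA: "\<psi> g h \<in> A" if "g \<in> carrier G" "h \<in> carrier G" for g h
      using coc that unfolding normalised_cocycle_def by blast
    have cocy: "\<psi> g h * \<psi> (g \<otimes>\<^bsub>G\<^esub> h) k = \<psi> g (h \<otimes>\<^bsub>G\<^esub> k) * \<psi> h k"
      if "g \<in> carrier G" "h \<in> carrier G" "k \<in> carrier G" for g h k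
      using coc that unfolding normalised_cocycle_def by blast
    have ps1: "\<psi> \<one>\<^bsub>G\<^esub> g = 1" if "g \<in> carrier G" for g
      using coc that unfolding normalised_cocycle_def by blast
    have XA: "X x y \<in> A" if "x \<in> carrier G" "y \<in> carrier G" for x y
      by (rule X_entries[OF G fin Au MX MA that])
    have one: "1 \<in> A" using Au unfolding finite_unit_subgroup_def by blast
    have comm: "gmat_mult G X (mono_rep G \<psi> (1, g)) x y = gmat_mult G (mono_rep G \<psi> (1, g)) X x y"
      if "g \<in> carrier G" "x \<in> carrier G" "y \<in> carrier G" for g x y
      using XC that one unfolding centraliser_def ext_carrier_def gmat_eq_def by blast
    define S where "S = (\<lambda>x u. \<psi> (inv\<^bsub>G\<^esub> u) u * X x (inv\<^bsub>G\<^esub> u))"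
    define \<phi> where "\<phi> = (\<lambda>t. S \<one>\<^bsub>G\<^esub> t)"
    have MS: "A_equiv G A M S"
      by (rule A_equiv_col[OF G fin Au MX, of "\<lambda>u. \<psi> (inv\<^bsub>G\<^esub> u) u"])
         (auto simp: S_def intro!: psA)
    have phA: "\<forall>g\<in>carrier G. \<phi> g \<in> A"
      by (auto simp: \<phi>_def S_def intro!: mulA psA XA)
    have "gmat_eq G S (\<lambda>x y. \<psi> x y * \<phi> (x \<otimes>\<^bsub>G\<^esub> y))"
      unfolding gmat_eq_def
    proof (intro ballI)
      fix x u assume x: "x \<in> carrier G" and u: "u \<in> carrier G"
      define w where "w = inv\<^bsub>G\<^esub> u \<otimes>\<^bsub>G\<^esub> inv\<^bsub>G\<^esub> x"
      have w: "w \<in> carrier G" using x u by (simp add: w_def)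
      have iw: "inv\<^bsub>G\<^esub> (x \<otimes>\<^bsub>G\<^esub> u) = w" using x u by (simp add: w_def inv_mult_group)
      have wx: "w \<otimes>\<^bsub>G\<^esub> x = inv\<^bsub>G\<^esub> u" using x u by (simp add: w_def m_assoc)
      have ph: "\<phi> (x \<otimes>\<^bsub>G\<^esub> u) = \<psi> w (x \<otimes>\<^bsub>G\<^esub> u) * X \<one>\<^bsub>G\<^esub> w"
        unfolding \<phi>_def S_def iw by simp
      have "X \<one>\<^bsub>G\<^esub> w * (1 * \<psi> w x) = 1 * \<psi> \<one>\<^bsub>G\<^esub> x * X (\<one>\<^bsub>G\<^esub> \<otimes>\<^bsub>G\<^esub> x) (inv\<^bsub>G\<^esub> u)"
        using comm[of x "\<one>\<^bsub>G\<^esub>" "inv\<^bsub>G\<^esub> u"] x u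
          mult_rep_right[OF G fin, of "\<one>\<^bsub>G\<^esub>" "inv\<^bsub>G\<^esub> u" x X \<psi> 1]
          mult_rep_left[OF G fin, of "\<one>\<^bsub>G\<^esub>" "inv\<^bsub>G\<^esub> u" x \<psi> 1 X]
        by (simp add: w_def)
      then have cm: "X \<one>\<^bsub>G\<^esub> w * \<psi> w x = X x (inv\<^bsub>G\<^esub> u)" using ps1 x by simp
      have c: "\<psi> w x * \<psi> (inv\<^bsub>G\<^esub> u) u = \<psi> w (x \<otimes>\<^bsub>G\<^esub> u) * \<psi> x u"
        using cocy[of w x u] w x u by (simp add: wx)
      show "S x u = \<psi> x u * \<phi> (x \<otimes>\<^bsub>G\<^esub> u)"
        unfolding S_def ph cm[symmetric]
        using c by (simp add: mult_ac)
    qed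
    then have "strictly_cocyclic G A S"
      unfolding strictly_cocyclic_def using coc phA by blast
    then show "cocyclic G A M" unfolding cocyclic_def using MS by blast
  qed
qed

end
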